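(* Consider a multi-sender single-uniprior index-coding instance with binary messages, information-flow graph $\mathcal{G}$ and message graph $\mathcal{U}$, and let $\mathcal{V}_S$ be the vertex set of a leaf SCC of $\mathcal{G}$. Form $(\mathcal{G}',\mathcal{U}')$ by pruning this leaf SCC: select an arbitrary $v\in\mathcal{V}_S$ and remove all outgoing arcs of $v$ from $\mathcal{G}$ (the message graph and senders are unchanged). Then \[ N_{\mathrm{SCC}}(\mathcal{G}')=N_{\mathrm{SCC}}(\mathcal{G})-1,\qquad \tilde{\ell}^*(\mathcal{G}',\mathcal{U}')\le\tilde{\ell}^*(\mathcal{G},\mathcal{U}),\qquad V_{\mathrm{out}}(\mathcal{G}')=V_{\mathrm{out}}(\mathcal{G})-1, \] where $N_{\mathrm{SCC}}(\cdot)$ denotes the number of leaf SCCs.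
   Context: Multi-sender single-uniprior index coding with binary messages: there are $n$ receivers and $n$ independent messages $x_1,\dots,x_n$, each a single bit uniformly distributed on $\{0,1\}$. Receiver $i$ knows $x_i$ a priori and requests a set of messages not containing $x_i$. The information-flow graph is the directed graph $\mathcal{G}=(\mathcal{V},\mathcal{A})$ with an arc $(j\to i)$ iff receiver $i$ requests $x_j$. There are $S$ senders; sender $s$ knows a subset $\mathcal{M}_s$ of the messages, and every message is known to some sender. An index code consists of, for each sender $s$, an encoding function mapping the messages in $\mathcal{M}_s$ to $\ell_s$ bits, and for each receiver $i$ a decoding function that, from all senders' outputs together with $x_i$, returns every message requested by $i$, for all message values; its length is $\sum_s \ell_s$. $\tilde{\ell}^*(\mathcal{G},\mathcal{U})$ is the minimum length of an index code for the instance. The message graph $\mathcal{U}$ is the undirected graph on $\mathcal{V}$ with an edge $\{i,j\}$ iff some sender knows both $x_i$ and $x_j$. A leaf vertex of $\mathcal{G}$ has no outgoing arcs; $V_{\mathrm{out}}(\mathcal{G})$ is the number of non-leaf vertices. A leaf SCC is a strongly connected component of $\mathcal{G}$ with at least two vertices and no arc from it to a vertex outside it. *)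

theory Defs
  imports Main
begin

text \<open>Vertices (= receivers = messages) are 0..<n. The information-flow graph is a set
  of arcs A; a pair (j, i) in A is the arc j -> i, meaning receiver i requests x_j.
  Senders are 0..<S; sender s knows the messages with indices in M s.\<close>

definition valid_instance :: "nat \<Rightarrow> (nat \<times> nat) set \<Rightarrow> nat \<Rightarrow> (nat \<Rightarrow> nat set) \<Rightarrow> bool" where
  "valid_instance n A S M \<longleftrightarrow>
     A \<subseteq> {0..<n} \<times> {0..<n} \<and> (\<forall>i. (i, i) \<notin> A) \<and>
     (\<forall>s<S. M s \<subseteq> {0..<n}) \<and> (\<forall>j<n. \<exists>s<S. j \<in> M s)"

definition is_index_code ::
  "nat \<Rightarrow> (nat \<times> nat) set \<Rightarrow> nat \<Rightarrow> (nat \<Rightarrow> nat set) \<Rightarrow> (nat \<Rightarrow> nat)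
   \<Rightarrow> (nat \<Rightarrow> (nat \<Rightarrow> bool) \<Rightarrow> bool list)
   \<Rightarrow> (nat \<Rightarrow> (nat \<Rightarrow> bool list) \<Rightarrow> bool \<Rightarrow> nat \<Rightarrow> bool) \<Rightarrow> bool" where
  "is_index_code n A S M l enc dec \<longleftrightarrow>
     (\<forall>s<S. \<forall>x. length (enc s x) = l s) \<and>
     (\<forall>s<S. \<forall>x y. (\<forall>j\<in>M s. x j = y j) \<longrightarrow> enc s x = enc s y) \<and>
     (\<forall>i<n. \<forall>x. \<forall>j. (j, i) \<in> A \<longrightarrow>
        dec i (\<lambda>s. if s < S then enc s x else []) (x i) j = x j)"

definition achievable_length ::
  "nat \<Rightarrow> (nat \<times> nat) set \<Rightarrow> nat \<Rightarrow> (nat \<Rightarrow> nat set) \<Rightarrow> nat \<Rightarrow> bool" where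
  "achievable_length n A S M L \<longleftrightarrow>
     (\<exists>l enc dec. is_index_code n A S M l enc dec \<and> (\<Sum>s<S. l s) = L)"

definition opt_length :: "nat \<Rightarrow> (nat \<times> nat) set \<Rightarrow> nat \<Rightarrow> (nat \<Rightarrow> nat set) \<Rightarrow> nat" where
  "opt_length n A S M = (LEAST L. achievable_length n A S M L)"

definition is_scc :: "nat \<Rightarrow> (nat \<times> nat) set \<Rightarrow> nat set \<Rightarrow> bool" where
  "is_scc n A C \<longleftrightarrow> C \<subseteq> {0..<n} \<and> C \<noteq> {} \<and>
     (\<forall>u\<in>C. \<forall>w\<in>C. (u, w) \<in> A\<^sup>*) \<and>
     (\<forall>u\<in>C. \<forall>w\<in>{0..<n}. (u, w) \<in> A\<^sup>* \<and> (w, u) \<in> A\<^sup>* \<longrightarrow> w \<in> C)"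

definition is_leaf_scc :: "nat \<Rightarrow> (nat \<times> nat) set \<Rightarrow> nat set \<Rightarrow> bool" where
  "is_leaf_scc n A C \<longleftrightarrow> is_scc n A C \<and> card C \<ge> 2 \<and>
     (\<forall>u\<in>C. \<forall>w. (u, w) \<in> A \<longrightarrow> w \<in> C)"

definition N_SCC :: "nat \<Rightarrow> (nat \<times> nat) set \<Rightarrow> nat" where
  "N_SCC n A = card {C. is_leaf_scc n A C}"

definition V_out :: "nat \<Rightarrow> (nat \<times> nat) set \<Rightarrow> nat" where
  "V_out n A = card {i \<in> {0..<n}. \<exists>j. (i, j) \<in> A}"

definition prune :: "(nat \<times> nat) set \<Rightarrow> nat \<Rightarrow> (nat \<times> nat) set" where
  "prune A v = {(a, b) \<in> A. a \<noteq> v}"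

end

theory Submission
  imports Defs
begin

lemma prune_sub: "prune A v \<subseteq> A" unfolding prune_def by auto

lemma closed_C:
  assumes "\<forall>u\<in>C. \<forall>w. (u, w) \<in> A \<longrightarrow> w \<in> C" "(u,w) \<in> A\<^sup>*" "u \<in> C"
  shows "w \<in> C"
  using assms(2,3) by (induction rule: rtrancl_induct) (use assms(1) in blast)+

lemma outside_reach:
  assumes cl: "\<forall>u\<in>C. \<forall>w. (u, w) \<in> A \<longrightarrow> w \<in> C" and vC: "v \<in> C"
    and "(u,w) \<in> A\<^sup>*" "w \<notin> C"
  shows "(u,w) \<in> (prune A v)\<^sup>*"
  using assms(3,4)
proof (induction rule: converse_rtrancl_induct)
  case base then show ?case by simp
next
  case (step u y)
  have "y \<notin> C" using closed_C[OF cl step(2)] step(4) by blast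
  then have "u \<notin> C" using cl step(1) by blast
  then have "(u,y) \<in> prune A v" using step(1) vC unfolding prune_def by auto
  then show ?case using step by (meson converse_rtrancl_into_rtrancl)
qed

lemma from_v:
  assumes "(v,w) \<in> (prune A v)\<^sup>*" shows "w = v"
  using assms by (cases rule: converse_rtranclE) (auto simp: prune_def)

lemma to_v:
  assumes "(u,v) \<in> A\<^sup>*" shows "(u,v) \<in> (prune A v)\<^sup>*"
  using assms
proof (induction rule: converse_rtrancl_induct)
  case base then show ?case by simp
next
  case (step u y)
  show ?case
  proof (cases "u = v")
    case True then show ?thesis by simp
  next
    case False
    then have "(u,y) \<in> prune A v" using step(1) unfolding prune_def by auto
    then show ?thesis using step by (meson converse_rtrancl_into_rtrancl)
  qed
qed

lemma rtrancl_sub: "(a,b) \<in> (prune A v)\<^sup>* \<Longrightarrow> (a,b) \<in> A\<^sup>*"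
  using rtrancl_mono[OF prune_sub] by blast

lemma leaf_closed:
  assumes "\<forall>u\<in>D. \<forall>w. (u, w) \<in> B \<longrightarrow> w \<in> D" "(u,w) \<in> B\<^sup>*" "u \<in> D"
  shows "w \<in> D"
  using closed_C[OF assms] .

lemma leaf_sets:
  assumes leaf: "is_leaf_scc n A C" and vC: "v \<in> C"
  shows "{D. is_leaf_scc n (prune A v) D} = {D. is_leaf_scc n A D} - {C}"
proof -
  let ?B = "prune A v"
  have cl: "\<forall>u\<in>C. \<forall>w. (u, w) \<in> A \<longrightarrow> w \<in> C" and sc: "is_scc n A C"
    and c2: "card C \<ge> 2" using leaf unfolding is_leaf_scc_def by auto
  have Cn: "C \<subseteq> {0..<n}" and Creach: "\<forall>u\<in>C. \<forall>w\<in>C. (u, w) \<in> A\<^sup>*"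
    using sc unfolding is_scc_def by auto
  show ?thesis
  proof (intro set_eqI iffI)
    fix D assume "D \<in> {D. is_leaf_scc n ?B D}"
    then have L: "is_leaf_scc n ?B D" by simp
    have Dn: "D \<subseteq> {0..<n}" and Dne: "D \<noteq> {}" and
      Dr: "\<forall>u\<in>D. \<forall>w\<in>D. (u, w) \<in> ?B\<^sup>*" and
      Dm: "\<forall>u\<in>D. \<forall>w\<in>{0..<n}. (u, w) \<in> ?B\<^sup>* \<and> (w, u) \<in> ?B\<^sup>* \<longrightarrow> w \<in> D" and
      Dcl: "\<forall>u\<in>D. \<forall>w. (u, w) \<in> ?B \<longrightarrow> w \<in> D" and D2: "card D \<ge> 2"
      using L unfolding is_leaf_scc_def is_scc_def by blast+
    have disj: "D \<inter> C = {}"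
    proof (rule ccontr)
      assume "D \<inter> C \<noteq> {}"
      then obtain u where u: "u \<in> D" "u \<in> C" by blast
      have "(u,v) \<in> A\<^sup>*" using Creach u(2) vC by blast
      then have "(u,v) \<in> ?B\<^sup>*" by (rule to_v)
      then have "v \<in> D" using leaf_closed[OF Dcl _ u(1)] by blast
      then have "D \<subseteq> {v}" using Dr from_v by blast
      then have "card D \<le> 1" using card_mono[of "{v}" D] by simp
      then show False using D2 by simp
    qed
    have "is_leaf_scc n A D"
      unfolding is_leaf_scc_def is_scc_def
    proof (intro conjI ballI allI impI)
      show "D \<subseteq> {0..<n}" "D \<noteq> {}" "2 \<le> card D" using Dn Dne D2 by auto
    next
      fix u w assume "u \<in> D" "w \<in> D" then show "(u,w) \<in> A\<^sup>*" using Dr rtrancl_sub by blast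
    next
      fix u w assume u: "u \<in> D" and w: "w \<in> {0..<n}" and r: "(u, w) \<in> A\<^sup>* \<and> (w, u) \<in> A\<^sup>*"
      have uC: "u \<notin> C" using u disj by blast
      then have wC: "w \<notin> C" using r closed_C[OF cl, of w u] by blast
      have "(u,w) \<in> ?B\<^sup>*" "(w,u) \<in> ?B\<^sup>*"
        using outside_reach[OF cl vC] r uC wC by auto
      then show "w \<in> D" using Dm u w by blast
    next
      fix u w assume u: "u \<in> D" and a: "(u,w) \<in> A"
      have "u \<noteq> v" using u disj vC by blast
      then have "(u,w) \<in> ?B" using a unfolding prune_def by auto
      then show "w \<in> D" using Dcl u by blast
    qed
    moreover have "D \<noteq> C" using disj Dne by blast
    ultimately show "D \<in> {D. is_leaf_scc n A D} - {C}" by simp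
  next
    fix D assume "D \<in> {D. is_leaf_scc n A D} - {C}"
    then have L: "is_leaf_scc n A D" and DnC: "D \<noteq> C" by auto
    have Dn: "D \<subseteq> {0..<n}" and Dne: "D \<noteq> {}" and
      Dr: "\<forall>u\<in>D. \<forall>w\<in>D. (u, w) \<in> A\<^sup>*" and
      Dm: "\<forall>u\<in>D. \<forall>w\<in>{0..<n}. (u, w) \<in> A\<^sup>* \<and> (w, u) \<in> A\<^sup>* \<longrightarrow> w \<in> D" and
      Dcl: "\<forall>u\<in>D. \<forall>w. (u, w) \<in> A \<longrightarrow> w \<in> D" and D2: "card D \<ge> 2"
      using L unfolding is_leaf_scc_def is_scc_def by blast+
    have disj: "D \<inter> C = {}"
    proof (rule ccontr)
      assume "D \<inter> C \<noteq> {}"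
      then obtain u where u: "u \<in> D" "u \<in> C" by blast
      have "D \<subseteq> C" using Dr u closed_C[OF cl, of u] by blast
      moreover have "C \<subseteq> D" using Dm Creach u Cn by blast
      ultimately show False using DnC by blast
    qed
    have "is_leaf_scc n ?B D"
      unfolding is_leaf_scc_def is_scc_def
    proof (intro conjI ballI allI impI)
      show "D \<subseteq> {0..<n}" "D \<noteq> {}" "2 \<le> card D" using Dn Dne D2 by auto
    next
      fix u w assume "u \<in> D" "w \<in> D" then show "(u,w) \<in> ?B\<^sup>*"
        using Dr outside_reach[OF cl vC] disj by blast
    next
      fix u w assume u: "u \<in> D" and w: "w \<in> {0..<n}" and r: "(u, w) \<in> ?B\<^sup>* \<and> (w, u) \<in> ?B\<^sup>*"
      then show "w \<in> D" using Dm rtrancl_sub by blast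
    next
      fix u w assume u: "u \<in> D" and a: "(u,w) \<in> ?B"
      then show "w \<in> D" using Dcl prune_sub by blast
    qed
    then show "D \<in> {D. is_leaf_scc n ?B D}" by simp
  qed
qed

lemma achievable_exists:
  assumes "valid_instance n A S M"
  shows "achievable_length n A S M (S * n)"
proof -
  define enc where "enc = (\<lambda>(s::nat) (x::nat\<Rightarrow>bool). map (\<lambda>k. if k \<in> M s then x k else False) [0..<n])"
  define dec where "dec = (\<lambda>(i::nat) (w::nat \<Rightarrow> bool list) (b::bool) (j::nat). w (SOME s. s < S \<and> j \<in> M s) ! j)"
  have "is_index_code n A S M (\<lambda>_. n) enc dec"
    unfolding is_index_code_def
  proof (intro conjI allI impI ballI)
    fix s and x :: "nat \<Rightarrow> bool" show "length (enc s x) = n" by (simp add: enc_def)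
  next
    fix s and x y :: "nat \<Rightarrow> bool" assume "s < S" "\<forall>j\<in>M s. x j = y j"
    then show "enc s x = enc s y" by (auto simp: enc_def)
  next
    fix i x j assume "i < n" "(j,i) \<in> A"
    then have jn: "j < n" using assms unfolding valid_instance_def by auto
    then have "\<exists>s. s < S \<and> j \<in> M s" using assms unfolding valid_instance_def by auto
    then have s: "(SOME s. s < S \<and> j \<in> M s) < S \<and> j \<in> M (SOME s. s < S \<and> j \<in> M s)"
      by (rule someI_ex)
    show "dec i (\<lambda>s. if s < S then enc s x else []) (x i) j = x j"
      using s jn by (simp add: dec_def enc_def)
  qed
  then show ?thesis unfolding achievable_length_def by fastforce
qed

lemma achievable_mono:
  assumes "achievable_length n A S M L" "B \<subseteq> A"
  shows "achievable_length n B S M L"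
proof -
  obtain l enc dec where c: "is_index_code n A S M l enc dec" "(\<Sum>s<S. l s) = L"
    using assms(1) unfolding achievable_length_def by blast
  have "is_index_code n B S M l enc dec"
    using c(1) assms(2) unfolding is_index_code_def by (meson subsetD)
  then show ?thesis using c(2) unfolding achievable_length_def by blast
qed

lemma part0:
 fixes n S :: nat and A :: "(nat \<times> nat) set" and M :: "nat \<Rightarrow> nat set"
    and C :: "nat set" and v :: nat
  assumes "valid_instance n A S M"
    and "is_leaf_scc n A C"
    and "v \<in> C"
   shows "N_SCC n (prune A v) = N_SCC n A - 1"
proof -

  have fin: "finite {D. is_leaf_scc n A D}"
    by (rule finite_subset[of _ "Pow {0..<n}"]) (unfold is_leaf_scc_def is_scc_def, blast, simp)
  have "C \<in> {D. is_leaf_scc n A D}" using assms(2) by simp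
  then show "N_SCC n (prune A v) = N_SCC n A - 1"
    unfolding N_SCC_def leaf_sets[OF assms(2,3)] using fin by simp

qed

lemma part1:
 fixes n S :: nat and A :: "(nat \<times> nat) set" and M :: "nat \<Rightarrow> nat set"
    and C :: "nat set" and v :: nat
  assumes "valid_instance n A S M"
    and "is_leaf_scc n A C"
    and "v \<in> C"
   shows "opt_length n (prune A v) S M \<le> opt_length n A S M"
proof -
  have ex: "achievable_length n A S M (opt_length n A S M)"
    unfolding opt_length_def using achievable_exists[OF assms(1)] by (rule LeastI)
  show "opt_length n (prune A v) S M \<le> opt_length n A S M"
    unfolding opt_length_def[of n "prune A v"]
    by (rule Least_le) (rule achievable_mono[OF ex prune_sub])

qed

lemma part2:
 fixes n S :: nat and A :: "(nat \<times> nat) set" and M :: "nat \<Rightarrow> nat set"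
    and C :: "nat set" and v :: nat
  assumes "valid_instance n A S M"
    and "is_leaf_scc n A C"
    and "v \<in> C"
   shows "V_out n (prune A v) = V_out n A - 1"
proof -
  have sc: "is_scc n A C" and c2: "card C \<ge> 2" using assms(2) unfolding is_leaf_scc_def by blast+
  obtain w where w: "w \<in> C" "w \<noteq> v"
  proof -
    have "\<not> C \<subseteq> {v}" using c2 card_mono[of "{v}" C] by auto
    then show ?thesis using that by blast
  qed
  have "(v,w) \<in> A\<^sup>*" using sc w assms(3) unfolding is_scc_def by blast
  then obtain y where y: "(v,y) \<in> A" using w(2) by (cases rule: converse_rtranclE) auto
  have "C \<subseteq> {0..<n}" using sc unfolding is_scc_def by blast
  then have vn: "v < n" using assms(3) by auto
  have eq: "{i \<in> {0..<n}. \<exists>j. (i, j) \<in> prune A v} = {i \<in> {0..<n}. \<exists>j. (i, j) \<in> A} - {v}"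
    unfolding prune_def by auto
  have "v \<in> {i \<in> {0..<n}. \<exists>j. (i, j) \<in> A}" using y vn by auto
  then show "V_out n (prune A v) = V_out n A - 1"
    unfolding V_out_def eq by (simp add: card_Diff_singleton)

qed

theorem proposition3:
  fixes n S :: nat and A :: "(nat \<times> nat) set" and M :: "nat \<Rightarrow> nat set"
    and C :: "nat set" and v :: nat
  assumes "valid_instance n A S M"
    and "is_leaf_scc n A C"
    and "v \<in> C"
  shows "N_SCC n (prune A v) = N_SCC n A - 1 \<and>
         opt_length n (prune A v) S M \<le> opt_length n A S M \<and>
         V_out n (prune A v) = V_out n A - 1"
  using part0[OF assms] part1[OF assms] part2[OF assms] by blast

end
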